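(* Let $a,b\in\mathbb{R}$ with $a,b,a+b+1\notin\mathbb{Z}_-$, and let $\pi_n(x)=\pi_n(x;a,b)$, $n\in\mathbb{N}_0$, be the monic classical Jacobi polynomials. Then for all $m,n\in\mathbb{N}_0$ the function $$\Big(\pi_m(x)\pi_n(x)-\delta_{mn}\frac{\nu(n;a,b)}{\nu(0;a,b)}\Big)(1-x)^a(1+x)^b$$ has a quasi-rational antiderivative belonging to $(1-x)^{a+1}(1+x)^{b+1}\mathcal{Q}_\pm$; i.e. the formal norms of the classical Jacobi polynomials are $\nu_n=\nu(n;a,b)$.
   Context: $\mathbb{Z}_-=\{-1,-2,\ldots\}$; $\mathcal{Q}_\pm$ is the set of rational functions regular at $x=1$ and $x=-1$. $P_n(x;a,b)=2^{-n}\sum_{k=0}^n\binom{n+a}{n-k}\binom{n+b}{k}(x-1)^k(x+1)^{n-k}$ and $\pi_n(x;a,b)=\frac{2^nn!}{(n+a+b+1)_n}P_n(x;a,b)$ (monic), where $(t)_n=t(t+1)\cdots(t+n-1)$. $\nu(z;a,b)=2^{1+a+b+2z}\frac{\Gamma(z+1)\Gamma(a+b+z+1)\Gamma(a+z+1)\Gamma(b+z+1)}{\Gamma(a+b+2z+1)\Gamma(a+b+2z+2)}$, so $\nu(0;a,b)=2^{1+a+b}\Gamma(a+1)\Gamma(b+1)/\Gamma(a+b+2)$. A quasi-rational function is one whose logarithmic derivative is rational; an antiderivative of $f$ is a function $\rho$ with $\rho'=f$. *)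

theory Defs
  imports "HOL-Analysis.Analysis" "HOL-Computational_Algebra.Polynomial"
begin

definition jacobiP :: "nat \<Rightarrow> real \<Rightarrow> real \<Rightarrow> real \<Rightarrow> real" where
  "jacobiP n a b x = (1 / 2 ^ n) * (\<Sum>k\<le>n. ((real n + a) gchoose (n - k)) * ((real n + b) gchoose k)
       * (x - 1) ^ k * (x + 1) ^ (n - k))"

definition jacobi_pi :: "nat \<Rightarrow> real \<Rightarrow> real \<Rightarrow> real \<Rightarrow> real" where
  "jacobi_pi n a b x = (2 ^ n * fact n / pochhammer (real n + a + b + 1) n) * jacobiP n a b x"

text \<open>nu(z;a,b) for z a natural number. At z = 0 we use the closed form stated in the paper
  (this avoids the removable Gamma-pole occurring in the general formula when a+b = -1).\<close>
definition jacobi_nu :: "nat \<Rightarrow> real \<Rightarrow> real \<Rightarrow> real" where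
  "jacobi_nu z a b =
     (if z = 0 then 2 powr (1 + a + b) * Gamma (a + 1) * Gamma (b + 1) / Gamma (a + b + 2)
      else 2 powr (1 + a + b + 2 * real z) *
        (Gamma (real z + 1) * Gamma (a + b + real z + 1) * Gamma (a + real z + 1) * Gamma (b + real z + 1))
        / (Gamma (a + b + 2 * real z + 1) * Gamma (a + b + 2 * real z + 2)))"

definition neg_ints :: "real set" where
  "neg_ints = {- (real k + 1) | k. True}"

end

theory Submission imports Defs begin

definition UU :: "real poly" where "UU = [:-1, 1:]"
definition VV :: "real poly" where "VV = [:1, 1:]"

definition Lop :: "real \<Rightarrow> real \<Rightarrow> real poly \<Rightarrow> real poly" where
  "Lop a b q = - (UU * VV) * pderiv q + (smult (-(a+1)) VV + smult (-(b+1)) UU) * q"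

lemma pderiv_UU[simp]: "pderiv UU = 1" by (simp add: UU_def pderiv_pCons)
lemma pderiv_VV[simp]: "pderiv VV = 1" by (simp add: VV_def pderiv_pCons)

lemma Lop_add: "Lop a b (p + q) = Lop a b p + Lop a b q"
  by (simp add: Lop_def pderiv_add algebra_simps smult_add_right)
lemma Lop_smult: "Lop a b (smult c p) = smult c (Lop a b p)"
  by (simp add: Lop_def pderiv_smult algebra_simps smult_add_right smult_diff_right)
lemma Lop_minus: "Lop a b (- p) = - Lop a b p"
  by (simp add: Lop_def pderiv_minus algebra_simps)
lemma Lop_diff: "Lop a b (p - q) = Lop a b p - Lop a b q"
  by (simp add: Lop_def pderiv_diff algebra_simps smult_add_right smult_diff_right)
lemma Lop_0[simp]: "Lop a b 0 = 0" by (simp add: Lop_def)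

lemma pderiv_UV: "pderiv (UU^k * VV^j) = smult (real k) (UU^(k-1) * VV^j) + smult (real j) (UU^k * VV^(j-1))"
  by (simp add: pderiv_mult pderiv_power algebra_simps)

lemma pow_pred: "smult (real k) (UU^(k-1) * UU) = smult (real k) (UU^k)"
  by (cases k) (auto simp: algebra_simps)
lemma pow_predV: "smult (real k) (VV^(k-1) * VV) = smult (real k) (VV^k)"
  by (cases k) (auto simp: algebra_simps)

lemma polyI: "(\<And>x. poly p x = poly q x) \<Longrightarrow> p = (q::real poly)"
  using poly_eq_poly_eq_iff by blast

lemma poly_UU[simp]: "poly UU x = x - 1" by (simp add: UU_def)
lemma poly_VV[simp]: "poly VV x = x + 1" by (simp add: VV_def)

lemma pow_pred_real: "real k * (y::real)^(k-1) * y = real k * y^k"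
  by (cases k) auto

lemma Lop_UV: "Lop a b (UU^k * VV^j) =
   smult (-(real k + a + 1)) (UU^k * VV^(Suc j)) + smult (-(real j + b + 1)) (UU^(Suc k) * VV^j)"
proof (rule polyI)
  fix x
  have e1: "real k * (x-1)^(k-1) * (x-1) = real k * (x-1)^k" by (rule pow_pred_real)
  have e2: "real j * (x+1)^(j-1) * (x+1) = real j * (x+1)^j" by (rule pow_pred_real)
  have "poly (Lop a b (UU^k * VV^j)) x = - ((real k * (x-1)^(k-1) * (x-1)) * (x+1)^j * (x+1))
      - (real j * (x+1)^(j-1) * (x+1)) * (x-1)^k * (x-1)
     + (-(a+1)*(x+1) - (b+1)*(x-1)) * (x-1)^k * (x+1)^j"
    unfolding Lop_def pderiv_UV by (simp add: algebra_simps)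
  also have "\<dots> = - ((real k * (x-1)^k) * (x+1)^j * (x+1))
      - (real j * (x+1)^j) * (x-1)^k * (x-1)
     + (-(a+1)*(x+1) - (b+1)*(x-1)) * (x-1)^k * (x+1)^j"
    by (simp only: e1 e2)
  also have "\<dots> = poly (smult (-(real k + a + 1)) (UU^k * VV^(Suc j)) + smult (-(real j + b + 1)) (UU^(Suc k) * VV^j)) x"
    by (simp add: algebra_simps)
  finally show "poly (Lop a b (UU^k * VV^j)) x = poly (smult (-(real k + a + 1)) (UU^k * VV^(Suc j)) + smult (-(real j + b + 1)) (UU^(Suc k) * VV^j)) x" .
qed

lemma Lop_sigma: "Lop a b (-(UU*VV) * q) = -(UU*VV) * Lop (a+1) (b+1) q"
  by (rule polyI) (simp add: Lop_def pderiv_mult pderiv_minus algebra_simps)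

lemma Lop_prod: "Lop a b (f * pderiv g) = -(UU*VV) * pderiv f * pderiv g + f * Lop a b (pderiv g)"
  by (simp add: Lop_def pderiv_mult algebra_simps)

lemma gch: "((x::real) - real j) * (x gchoose j) = real (Suc j) * (x gchoose Suc j)"
  using gbinomial_absorb_comp[of x j] gbinomial_absorption[of j x] by simp

definition jcoef :: "nat \<Rightarrow> real \<Rightarrow> real \<Rightarrow> nat \<Rightarrow> real" where
  "jcoef n a b k = ((real n + a) gchoose (n - k)) * ((real n + b) gchoose k)"

definition jPs :: "nat \<Rightarrow> real \<Rightarrow> real \<Rightarrow> real poly" where
  "jPs n a b = (\<Sum>k\<le>n. smult (jcoef n a b k) (UU^k * VV^(n-k)))"

lemma pderiv_sum: "pderiv (\<Sum>k\<in>A. f k) = (\<Sum>k\<in>A. pderiv (f k))"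
  by (induction A rule: infinite_finite_induct) (auto simp: pderiv_add)

lemma Lop_sum: "Lop a b (\<Sum>k\<in>A. f k) = (\<Sum>k\<in>A. Lop a b (f k))"
  by (induction A rule: infinite_finite_induct) (auto simp: Lop_add)

lemma smult_sum2: "smult c (\<Sum>k\<in>A. f k) = (\<Sum>k\<in>A. smult c (f k))"
  by (induction A rule: infinite_finite_induct) (auto simp: smult_add_right)

lemma coef_deriv:
  assumes "k \<le> m"
  shows "jcoef (Suc m) a b (Suc k) * real (Suc k) + jcoef (Suc m) a b k * real (Suc m - k)
     = (real m + a + b + 2) * jcoef m (a+1) (b+1) k"
proof -
  define A where "A = real m + 1 + a"
  define M where "M = real m + 1 + b"
  have s: "Suc m - k = Suc (m - k)" using assms by simp
  have r: "real (m - k) = real m - real k" using assms by simp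
  have h1: "real (Suc k) * (M gchoose Suc k) = (M - real k) * (M gchoose k)" using gch[of M k] by simp
  have h2: "real (Suc (m-k)) * (A gchoose Suc (m-k)) = (A - real (m-k)) * (A gchoose (m-k))"
    using gch[of A "m-k"] by simp
  have "jcoef (Suc m) a b (Suc k) * real (Suc k) + jcoef (Suc m) a b k * real (Suc m - k)
     = (A gchoose (m-k)) * (real (Suc k) * (M gchoose Suc k))
       + (real (Suc (m-k)) * (A gchoose Suc (m-k))) * (M gchoose k)"
    unfolding jcoef_def s A_def M_def by (simp add: algebra_simps)
  also have "\<dots> = (A gchoose (m-k)) * (M gchoose k) * ((M - real k) + (A - real (m-k)))"
    unfolding h1 h2 by (simp add: algebra_simps)
  also have "\<dots> = (real m + a + b + 2) * jcoef m (a+1) (b+1) k"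
    unfolding jcoef_def A_def M_def r by (simp add: algebra_simps)
  finally show ?thesis .
qed

lemma pderiv_jPs: "pderiv (jPs (Suc m) a b) = smult (real m + a + b + 2) (jPs m (a+1) (b+1))"
proof -
  have "pderiv (jPs (Suc m) a b) = (\<Sum>k\<le>Suc m. smult (jcoef (Suc m) a b k * real k) (UU^(k-1) * VV^(Suc m - k)))
     + (\<Sum>k\<le>Suc m. smult (jcoef (Suc m) a b k * real (Suc m - k)) (UU^k * VV^(Suc m - k - 1)))"
    unfolding jPs_def pderiv_sum pderiv_smult pderiv_UV
    by (simp add: smult_add_right sum.distrib)
  also have "(\<Sum>k\<le>Suc m. smult (jcoef (Suc m) a b k * real k) (UU^(k-1) * VV^(Suc m - k)))
     = (\<Sum>k\<le>m. smult (jcoef (Suc m) a b (Suc k) * real (Suc k)) (UU^k * VV^(m - k)))"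
    by (subst sum.atMost_Suc_shift) simp
  also have "(\<Sum>k\<le>Suc m. smult (jcoef (Suc m) a b k * real (Suc m - k)) (UU^k * VV^(Suc m - k - 1)))
     = (\<Sum>k\<le>m. smult (jcoef (Suc m) a b k * real (Suc m - k)) (UU^k * VV^(m - k)))"
    by (subst sum.atMost_Suc) simp
  also have "(\<Sum>k\<le>m. smult (jcoef (Suc m) a b (Suc k) * real (Suc k)) (UU^k * VV^(m - k)))
     + (\<Sum>k\<le>m. smult (jcoef (Suc m) a b k * real (Suc m - k)) (UU^k * VV^(m - k)))
     = (\<Sum>k\<le>m. smult ((real m + a + b + 2) * jcoef m (a+1) (b+1) k) (UU^k * VV^(m - k)))"
    unfolding sum.distrib[symmetric] smult_add_left[symmetric]
    by (rule sum.cong) (simp_all only: coef_deriv atMost_iff)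
  also have "\<dots> = smult (real m + a + b + 2) (jPs m (a+1) (b+1))"
    unfolding jPs_def smult_sum2 by simp
  finally show ?thesis .
qed

lemma coef_L:
  assumes "k \<le> Suc m"
  shows "(if k \<le> m then -(real k + a + 1) * jcoef m (a+1) (b+1) k else 0)
       + (if k = 0 then 0 else -(real (m - (k-1)) + b + 1) * jcoef m (a+1) (b+1) (k-1))
       = -(real m + 1) * jcoef (Suc m) a b k"
proof -
  define A where "A = real m + 1 + a"
  define M where "M = real m + 1 + b"
  have jm: "jcoef m (a+1) (b+1) i = (A gchoose (m - i)) * (M gchoose i)" for i
    unfolding jcoef_def A_def M_def by (simp add: algebra_simps)
  have js: "jcoef (Suc m) a b i = (A gchoose (Suc m - i)) * (M gchoose i)" for i
    unfolding jcoef_def A_def M_def by (simp add: algebra_simps)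
  consider "k = 0" | "k = Suc m" | i where "k = Suc i" "i < m" using assms
  proof (cases k)
    case 0 then show ?thesis using that(1) by simp
  next
    case (Suc i) then show ?thesis using that(2,3) assms by (cases "i = m") auto
  qed
  then show ?thesis
  proof cases
    case 1
    have "real (Suc m) * (A gchoose Suc m) = (A - real m) * (A gchoose m)" using gch[of A m] by simp
    moreover have "A - real m = a + 1" by (simp add: A_def)
    ultimately show ?thesis unfolding 1 jm js by (simp add: algebra_simps)
  next
    case 2
    have "real (Suc m) * (M gchoose Suc m) = (M - real m) * (M gchoose m)" using gch[of M m] by simp
    moreover have "M - real m = b + 1" by (simp add: M_def)
    ultimately show ?thesis unfolding 2 jm js by (simp add: algebra_simps)
  next
    case 3
    have s1: "m - i = Suc (m - Suc i)" using 3 by simp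
    have r1: "real (m - Suc i) = real m - real i - 1" using 3 by simp
    have r2: "real (m - i) = real m - real i" using 3 by simp
    have g1: "(A - real (m - Suc i)) * (A gchoose (m - Suc i)) = real (m - i) * (A gchoose (m - i))"
      using gch[of A "m - Suc i"] s1 by simp
    have g2: "(M - real i) * (M gchoose i) = real (Suc i) * (M gchoose Suc i)" using gch[of M i] by simp
    have eqA: "real (Suc i) + a + 1 = A - real (m - Suc i)" by (simp add: A_def r1)
    have eqM: "real (m-i) + b + 1 = M - real i" by (simp add: M_def r2)
    have "(if k \<le> m then -(real k + a + 1) * jcoef m (a+1) (b+1) k else 0)
       + (if k = 0 then 0 else -(real (m - (k-1)) + b + 1) * jcoef m (a+1) (b+1) (k-1))
       = -(real (Suc i) + a + 1) * ((A gchoose (m - Suc i)) * (M gchoose Suc i))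
         + -(real (m - i) + b + 1) * ((A gchoose (m - i)) * (M gchoose i))"
      using 3 by (simp add: jm)
    also have "\<dots> = - (((A - real (m - Suc i)) * (A gchoose (m - Suc i))) * (M gchoose Suc i))
         - (A gchoose (m - i)) * ((M - real i) * (M gchoose i))"
      unfolding eqA eqM by (simp add: algebra_simps)
    also have "\<dots> = - (real (m - i) + real (Suc i)) * ((A gchoose (m - i)) * (M gchoose Suc i))"
      unfolding g1 g2 by (simp add: algebra_simps)
    also have "\<dots> = -(real m + 1) * jcoef (Suc m) a b k"
      unfolding js 3 using 3 by (simp add: r2)
    finally show ?thesis .
  qed
qed

lemma Lop_jPs: "Lop a b (jPs m (a+1) (b+1)) = smult (-(real m + 1)) (jPs (Suc m) a b)"
proof -
  define d where "d = jcoef m (a+1) (b+1)"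
  define e1 where "e1 k = (if k \<le> m then -(real k + a + 1) * d k else 0)" for k
  define e2 where "e2 k = (if k = 0 then 0 else -(real (m - (k-1)) + b + 1) * d (k-1))" for k
  have "Lop a b (jPs m (a+1) (b+1)) = (\<Sum>k\<le>m. smult (d k) (smult (-(real k + a + 1)) (UU^k * VV^(Suc (m - k)))
       + smult (-(real (m-k) + b + 1)) (UU^(Suc k) * VV^(m-k))))"
    unfolding jPs_def Lop_sum Lop_smult Lop_UV d_def[symmetric] ..
  also have "\<dots> = (\<Sum>k\<le>m. smult (-(real k + a + 1) * d k) (UU^k * VV^(Suc m - k)))
     + (\<Sum>k\<le>m. smult (-(real (m-k) + b + 1) * d k) (UU^(Suc k) * VV^(Suc m - Suc k)))"
    unfolding sum.distrib[symmetric]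
    by (rule sum.cong) (auto simp: smult_add_right Suc_diff_le mult.commute)
  also have "(\<Sum>k\<le>m. smult (-(real k + a + 1) * d k) (UU^k * VV^(Suc m - k)))
      = (\<Sum>k\<le>Suc m. smult (e1 k) (UU^k * VV^(Suc m - k)))"
    by (subst sum.atMost_Suc) (simp add: e1_def)
  also have "(\<Sum>k\<le>m. smult (-(real (m-k) + b + 1) * d k) (UU^(Suc k) * VV^(Suc m - Suc k)))
      = (\<Sum>k\<le>Suc m. smult (e2 k) (UU^k * VV^(Suc m - k)))"
    by (subst sum.atMost_Suc_shift) (simp add: e2_def)
  also have "(\<Sum>k\<le>Suc m. smult (e1 k) (UU^k * VV^(Suc m - k))) + (\<Sum>k\<le>Suc m. smult (e2 k) (UU^k * VV^(Suc m - k)))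
     = (\<Sum>k\<le>Suc m. smult (-(real m + 1) * jcoef (Suc m) a b k) (UU^k * VV^(Suc m - k)))"
    unfolding sum.distrib[symmetric] smult_add_left[symmetric]
  proof (rule sum.cong)
    fix k assume "k \<in> {..Suc m}"
    then show "smult (e1 k + e2 k) (UU ^ k * VV ^ (Suc m - k)) = smult (-(real m + 1) * jcoef (Suc m) a b k) (UU ^ k * VV ^ (Suc m - k))"
      using coef_L[of k m a b] unfolding e1_def e2_def d_def by simp
  qed simp
  also have "\<dots> = smult (-(real m + 1)) (jPs (Suc m) a b)"
    unfolding jPs_def smult_sum2 by simp
  finally show ?thesis .
qed

definition jp :: "nat \<Rightarrow> real \<Rightarrow> real \<Rightarrow> real poly" where
  "jp n a b = smult (fact n / pochhammer (real n + a + b + 1) n) (jPs n a b)"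

definition Hy :: "real \<Rightarrow> real \<Rightarrow> bool" where
  "Hy a b \<longleftrightarrow> (\<forall>k::nat. a + b + 2 + real k \<noteq> 0)"

lemma Hy_shift: "Hy a b \<Longrightarrow> Hy (a+1) (b+1)"
  unfolding Hy_def
proof (intro allI impI)
  fix k :: nat assume h: "\<forall>k::nat. a + b + 2 + real k \<noteq> 0"
  have "a + b + 2 + real (k+2) \<noteq> 0" using h by blast
  then show "a + 1 + (b + 1) + 2 + real k \<noteq> 0" by (simp add: algebra_simps)
qed

lemma Hy_ne: "Hy a b \<Longrightarrow> real m + a + b + 2 \<noteq> 0"
proof -
  assume "Hy a b"
  then have "a + b + 2 + real m \<noteq> 0" unfolding Hy_def by blast
  then show ?thesis by (simp add: algebra_simps)
qed

lemma poch_split: "pochhammer (real (Suc m) + a + b + 1) (Suc m)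
   = (real m + a + b + 2) * pochhammer (real m + (a+1) + (b+1) + 1) m"
  by (simp add: pochhammer_rec algebra_simps)

lemma jp_0[simp]: "jp 0 a b = 1"
  by (simp add: jp_def jPs_def jcoef_def)

lemma cancel_aux: "(c::real) \<noteq> 0 \<Longrightarrow> x / (c * P) * c = x / P"
  by (cases "P = 0") (simp_all add: field_simps)

lemma pderiv_jp: assumes "Hy a b"
  shows "pderiv (jp (Suc m) a b) = smult (real m + 1) (jp m (a+1) (b+1))"
proof -
  have ne: "real m + a + b + 2 \<noteq> 0" using Hy_ne[OF assms] .
  define P where "P = pochhammer (real m + (a+1) + (b+1) + 1) m"
  have e: "fact (Suc m) / ((real m + a + b + 2) * P) * (real m + a + b + 2) = (real m + 1) * (fact m / P)"
    unfolding cancel_aux[OF ne] by (simp add: algebra_simps)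
  show ?thesis
    unfolding jp_def pderiv_smult pderiv_jPs poch_split smult_smult P_def[symmetric] e ..
qed

lemma Lop_jp: assumes "Hy a b"
  shows "Lop a b (jp m (a+1) (b+1)) = smult (-(real m + a + b + 2)) (jp (Suc m) a b)"
proof -
  have ne: "real m + a + b + 2 \<noteq> 0" using Hy_ne[OF assms] .
  define P where "P = pochhammer (real m + (a+1) + (b+1) + 1) m"
  have "(-(real m + a + b + 2)) * (fact (Suc m) / ((real m + a + b + 2) * P))
     = - (fact (Suc m) / ((real m + a + b + 2) * P) * (real m + a + b + 2))" by (metis mult.commute mult_minus_left)
  also have "\<dots> = fact m / P * (-(real m + 1))"
    unfolding cancel_aux[OF ne] by (simp add: algebra_simps add_divide_distrib)
  finally have e: "fact m / P * (-(real m + 1)) = (-(real m + a + b + 2)) * (fact (Suc m) / ((real m + a + b + 2) * P))" ..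
  show ?thesis
    unfolding jp_def Lop_smult Lop_jPs poch_split smult_smult P_def[symmetric] e ..
qed

definition lam :: "nat \<Rightarrow> real \<Rightarrow> real \<Rightarrow> real" where
  "lam n a b = real n * (real n + a + b + 1)"

lemma D_jp: assumes "Hy a b"
  shows "Lop a b (pderiv (jp n a b)) = smult (- lam n a b) (jp n a b)"
proof (cases n)
  case 0 then show ?thesis by (simp add: lam_def)
next
  case (Suc m)
  show ?thesis unfolding Suc pderiv_jp[OF assms] Lop_smult Lop_jp[OF assms] smult_smult
    by (simp add: lam_def algebra_simps)
qed

definition KK :: "real \<Rightarrow> real \<Rightarrow> real" where
  "KK a b = 4 * (a+1) * (b+1) / ((a+b+2) * (a+b+3))"

lemma poly_Lop_lin: "poly (Lop a b [:\<alpha>, \<beta>:]) x = -((x-1)*(x+1))*\<beta> + (-(a+1)*(x+1) - (b+1)*(x-1))*(\<alpha> + x*\<beta>)"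
  by (simp add: Lop_def pderiv_pCons algebra_simps)

lemma sigmaK: assumes "Hy a b"
  shows "-(UU*VV) - [:KK a b:] = Lop a b [:(b-a)/((a+b+2)*(a+b+3)), 1/(a+b+3):]"
proof -
  have n2: "a+b+2 \<noteq> 0" using Hy_ne[OF assms, of 0] by simp
  have n3: "a+b+3 \<noteq> 0" using Hy_ne[OF assms, of 1] by simp
  show ?thesis
  proof (rule polyI)
    fix x
    have n2': "a + (b + 2) \<noteq> 0" "a + (b + 3) \<noteq> 0" using n2 n3 by (simp_all add: algebra_simps)
    have "-((x-1)*(x+1)) - KK a b = -((x-1)*(x+1))*(1/(a+b+3)) + (-(a+1)*(x+1) - (b+1)*(x-1)) * ((b-a)/((a+b+2)*(a+b+3)) + x*(1/(a+b+3)))"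
      unfolding KK_def using n2 n3 by (simp add: divide_simps) (simp add: algebra_simps)
    then show "poly (-(UU*VV) - [:KK a b:]) x = poly (Lop a b [:(b-a)/((a+b+2)*(a+b+3)), 1/(a+b+3):]) x"
      unfolding poly_Lop_lin by (simp only: poly_diff poly_minus poly_mult poly_UU poly_VV poly_pCons poly_0 mult_zero_right add_0_right)
  qed
qed

primrec cR :: "nat \<Rightarrow> real \<Rightarrow> real \<Rightarrow> real" where
  "cR 0 a b = 1"
| "cR (Suc m) a b = (real m + 1) * KK a b / (real m + a + b + 2) * cR m (a+1) (b+1)"

lemma norm_ind: "Hy a b \<Longrightarrow> \<exists>q. jp n a b * jp n a b - [:cR n a b:] = Lop a b q"
proof (induction n arbitrary: a b)
  case 0
  show ?case by (rule exI[of _ 0]) simp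
next
  case (Suc m)
  have H: "Hy a b" by fact
  define P where "P = jp (Suc m) a b"
  define Q where "Q = jp m (a+1) (b+1)"
  define \<sigma> where "\<sigma> = -(UU*VV)"
  define R where "R = cR m (a+1) (b+1)"
  define l where "l = lam (Suc m) a b"
  have ne: "real m + a + b + 2 \<noteq> 0" using Hy_ne[OF H] .
  have lform: "l = (real m + 1) * (real m + a + b + 2)" unfolding l_def lam_def by (simp add: algebra_simps)
  have lne: "l \<noteq> 0" unfolding lform using ne by simp
  from Suc.IH[OF Hy_shift[OF H]] obtain q1 where q1': "jp m (a+1) (b+1) * jp m (a+1) (b+1) - [:cR m (a+1) (b+1):] = Lop (a+1) (b+1) q1"
    by (elim exE)
  have q1: "Q * Q - [:R:] = Lop (a+1) (b+1) q1" unfolding Q_def R_def by (rule q1')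
  define q2 where "q2 = [:(b-a)/((a+b+2)*(a+b+3)), 1/(a+b+3):]"
  have q2: "\<sigma> - [:KK a b:] = Lop a b q2"
    unfolding \<sigma>_def q2_def by (rule sigmaK[OF H])
  have dP: "pderiv P = smult (real m + 1) Q" unfolding P_def Q_def by (rule pderiv_jp[OF H])
  have DP: "Lop a b (pderiv P) = smult (-l) P" unfolding P_def l_def by (rule D_jp[OF H])
  have L1: "Lop a b (\<sigma> * q1) = \<sigma> * (Q * Q - [:R:])" unfolding \<sigma>_def Lop_sigma q1 ..
  have L2: "Lop a b (P * pderiv P) = \<sigma> * pderiv P * pderiv P + P * smult (-l) P"
    unfolding Lop_prod DP \<sigma>_def ..
  define X where "X = smult (1/l) (smult ((real m + 1)^2) (\<sigma> * q1 + smult R q2) - P * pderiv P)"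
  have LX: "Lop a b X = smult (1/l) (smult ((real m + 1)^2) (\<sigma> * (Q * Q - [:R:]) + smult R (\<sigma> - [:KK a b:]))
       - (\<sigma> * pderiv P * pderiv P + P * smult (-l) P))"
    unfolding X_def Lop_smult Lop_diff Lop_add L1 L2 q2 ..
  have cs: "cR (Suc m) a b = (real m + 1)^2 * R * KK a b / l"
  proof -
    have g: "c \<noteq> 0 \<Longrightarrow> u \<noteq> 0 \<Longrightarrow> u*K/c*R' = u^2*R'*K/(u*c)" for c u K R' :: real
      by (simp add: field_simps power2_eq_square)
    have "cR (Suc m) a b = (real m + 1) * KK a b / (real m + a + b + 2) * R" by (simp add: R_def)
    also have "\<dots> = (real m + 1)^2 * R * KK a b / l" unfolding lform by (rule g[OF ne]) simp
    finally show ?thesis .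
  qed
  have "P * P - [:cR (Suc m) a b:] = Lop a b X"
  proof (rule polyI)
    fix x
    show "poly (P * P - [:cR (Suc m) a b:]) x = poly (Lop a b X) x"
      unfolding LX cs dP using lne by (simp add: field_simps power2_eq_square)
  qed
  then show ?case unfolding P_def by (rule exI)
qed

lemma orth: assumes "Hy a b" "lam m a b \<noteq> lam n a b"
  shows "\<exists>q. jp m a b * jp n a b - [:0:] = Lop a b q"
proof -
  define l where "l = lam n a b - lam m a b"
  have lne: "l \<noteq> 0" using assms(2) unfolding l_def by simp
  have "Lop a b (jp n a b * pderiv (jp m a b) - jp m a b * pderiv (jp n a b)) = smult l (jp m a b * jp n a b)"
    unfolding Lop_diff Lop_prod D_jp[OF assms(1)] l_def
    by (rule polyI) (simp add: algebra_simps)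
  then have "jp m a b * jp n a b - [:0:] = Lop a b (smult (1/l) (jp n a b * pderiv (jp m a b) - jp m a b * pderiv (jp n a b)))"
    unfolding Lop_smult using lne by simp
  then show ?thesis by (rule exI)
qed

lemma np: assumes "x \<notin> neg_ints" shows "x + 1 + real k \<notin> \<int>\<^sub>\<le>\<^sub>0"
proof
  assume "x + 1 + real k \<in> \<int>\<^sub>\<le>\<^sub>0"
  then obtain n where "x + 1 + real k = - real n" by (elim nonpos_Ints_cases')
  then have "x = - (real (n + k) + 1)" by simp
  then have "x \<in> neg_ints" unfolding neg_ints_def by blast
  with assms show False by simp
qed

lemma np_ne: assumes "x \<notin> neg_ints" shows "x + 1 + real k \<noteq> 0"
  using np[OF assms, of k] by auto

lemma np_shift: assumes "x \<notin> neg_ints" shows "x + 1 \<notin> neg_ints"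
proof
  assume "x + 1 \<in> neg_ints"
  then obtain k where "x + 1 = - (real k + 1)" unfolding neg_ints_def by blast
  then have "x = - (real (Suc k) + 1)" by simp
  then have "x \<in> neg_ints" unfolding neg_ints_def by blast
  with assms show False by simp
qed

definition FF :: "nat \<Rightarrow> real \<Rightarrow> real \<Rightarrow> real" where
  "FF z a b = 2 powr (1 + a + b + 2 * real z) *
        (Gamma (real z + 1) * Gamma (a + b + real z + 1) * Gamma (a + real z + 1) * Gamma (b + real z + 1))
        / (Gamma (a + b + 2 * real z + 1) * Gamma (a + b + 2 * real z + 2))"

lemma nu_FF: assumes "z > 0 \<or> Gamma (a + b + 1) \<noteq> 0" shows "jacobi_nu z a b = FF z a b"
proof (cases "z = 0")
  case True
  then have g: "Gamma (a + b + 1) \<noteq> 0" using assms by simp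
  have e: "a + b + 2 = a + b + 1 + 1" by simp
  show ?thesis unfolding jacobi_nu_def FF_def True using g by (simp add: e)
next
  case False
  then show ?thesis unfolding jacobi_nu_def FF_def by simp
qed

lemma nu_suc:
  assumes "a + b + 1 \<notin> neg_ints"
  shows "FF (Suc m) a b * (real m + a + b + 2) = (real m + 1) * FF m (a+1) (b+1)"
proof -
  have z: "a + b + 1 + 1 + real m \<notin> \<int>\<^sub>\<le>\<^sub>0" by (rule np[OF assms])
  have e1: "Gamma (real (Suc m) + 1) = (real m + 1) * Gamma (real m + 1)"
    using Gamma_fact[of "Suc m", where ?'a=real] Gamma_fact[of m, where ?'a=real] by (simp add: add.commute)
  have e2: "Gamma (a + 1 + (b + 1) + real m + 1) = (real m + a + b + 2) * Gamma (a + b + real (Suc m) + 1)"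
  proof -
    have "Gamma (a + 1 + (b + 1) + real m + 1) = Gamma ((a + b + 1 + 1 + real m) + 1)" by (simp add: algebra_simps)
    also have "\<dots> = (a + b + 1 + 1 + real m) * Gamma (a + b + 1 + 1 + real m)" by (rule Gamma_plus1[OF z])
    also have "\<dots> = (real m + a + b + 2) * Gamma (a + b + real (Suc m) + 1)" by (simp add: algebra_simps)
    finally show ?thesis .
  qed
  have e3: "Gamma (a + 1 + real m + 1) = Gamma (a + real (Suc m) + 1)" by (simp add: algebra_simps)
  have e4: "Gamma (b + 1 + real m + 1) = Gamma (b + real (Suc m) + 1)" by (simp add: algebra_simps)
  have e5: "Gamma (a + 1 + (b + 1) + 2 * real m + 1) = Gamma (a + b + 2 * real (Suc m) + 1)" by (simp add: algebra_simps)
  have e6: "Gamma (a + 1 + (b + 1) + 2 * real m + 2) = Gamma (a + b + 2 * real (Suc m) + 2)" by (simp add: algebra_simps)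
  have e7: "(2::real) powr (1 + (a + 1) + (b + 1) + 2 * real m) = 2 powr (1 + a + b + 2 * real (Suc m))" by (simp add: algebra_simps)
  show ?thesis
    unfolding FF_def e1 e2 e3 e4 e5 e6 e7 by (simp add: algebra_simps)
qed

lemma nu0_shift:
  assumes "a \<notin> neg_ints" "b \<notin> neg_ints" "a + b + 1 \<notin> neg_ints"
  shows "jacobi_nu 0 (a+1) (b+1) = KK a b * jacobi_nu 0 a b"
proof -
  have za: "a + 1 + real 0 \<notin> \<int>\<^sub>\<le>\<^sub>0" by (rule np[OF assms(1)])
  have zb: "b + 1 + real 0 \<notin> \<int>\<^sub>\<le>\<^sub>0" by (rule np[OF assms(2)])
  have z2: "a + b + 1 + 1 + real 0 \<notin> \<int>\<^sub>\<le>\<^sub>0" by (rule np[OF assms(3)])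
  have z3: "a + b + 1 + 1 + real 1 \<notin> \<int>\<^sub>\<le>\<^sub>0" by (rule np[OF assms(3)])
  have ga: "Gamma (a + 1 + 1) = (a + 1) * Gamma (a + 1)" using Gamma_plus1[of "a+1"] za by simp
  have gb: "Gamma (b + 1 + 1) = (b + 1) * Gamma (b + 1)" using Gamma_plus1[of "b+1"] zb by simp
  have g2: "Gamma (a + b + 3) = (a + b + 2) * Gamma (a + b + 2)"
    using Gamma_plus1[of "a+b+2"] z2 by (simp add: algebra_simps)
  have g3: "Gamma (a + b + 4) = (a + b + 3) * Gamma (a + b + 3)"
    using Gamma_plus1[of "a+b+3"] z3 by (simp add: algebra_simps)
  have gne: "Gamma (a + b + 2) \<noteq> 0" using z2 by (simp add: Gamma_eq_zero_iff algebra_simps)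
  have n2: "a + b + 2 \<noteq> 0" using np_ne[OF assms(3), of 0] by simp
  have n3: "a + b + 3 \<noteq> 0" using np_ne[OF assms(3), of 1] by simp
  have p: "(2::real) powr (1 + (a + 1) + (b + 1)) = 4 * 2 powr (1 + a + b)"
  proof -
    have "(2::real) powr (1 + (a + 1) + (b + 1)) = 2 powr (2 + (1 + a + b))"
      by (rule arg_cong[where f="\<lambda>t. (2::real) powr t"]) simp
    also have "\<dots> = 2 powr 2 * 2 powr (1 + a + b)" by (rule powr_add)
    also have "(2::real) powr 2 = 4" by simp
    finally show ?thesis .
  qed
  have a4: "a + 1 + (b + 1) + 2 = a + b + 4" by simp
  show ?thesis
    unfolding jacobi_nu_def KK_def
    apply (simp only: simp_thms if_True p ga gb a4 g3 g2)
    using gne n2 n3 by (simp add: field_simps)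
qed

lemma nu0_ne:
  assumes "a \<notin> neg_ints" "b \<notin> neg_ints" "a + b + 1 \<notin> neg_ints"
  shows "jacobi_nu 0 a b \<noteq> 0"
proof -
  have za: "a + 1 + real 0 \<notin> \<int>\<^sub>\<le>\<^sub>0" by (rule np[OF assms(1)])
  have zb: "b + 1 + real 0 \<notin> \<int>\<^sub>\<le>\<^sub>0" by (rule np[OF assms(2)])
  have z2: "a + b + 1 + 1 + real 0 \<notin> \<int>\<^sub>\<le>\<^sub>0" by (rule np[OF assms(3)])
  show ?thesis unfolding jacobi_nu_def using za zb z2 by (simp add: Gamma_eq_zero_iff algebra_simps)
qed

lemma nu_ratio:
  assumes "a \<notin> neg_ints" "b \<notin> neg_ints" "a + b + 1 \<notin> neg_ints"
  shows "jacobi_nu n a b / jacobi_nu 0 a b = cR n a b"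
  using assms
proof (induction n arbitrary: a b)
  case 0
  then show ?case using nu0_ne[OF 0(1-3)] by simp
next
  case (Suc m)
  have a1: "a + 1 \<notin> neg_ints" by (rule np_shift[OF Suc.prems(1)])
  have b1: "b + 1 \<notin> neg_ints" by (rule np_shift[OF Suc.prems(2)])
  have ab1: "a + 1 + (b + 1) + 1 \<notin> neg_ints"
    using np_shift[OF np_shift[OF Suc.prems(3)]] by (simp add: algebra_simps)
  have IH: "jacobi_nu m (a+1) (b+1) / jacobi_nu 0 (a+1) (b+1) = cR m (a+1) (b+1)"
    by (rule Suc.IH[OF a1 b1 ab1])
  have ne0: "jacobi_nu 0 a b \<noteq> 0" by (rule nu0_ne[OF Suc.prems])
  have ne0': "jacobi_nu 0 (a+1) (b+1) \<noteq> 0" by (rule nu0_ne[OF a1 b1 ab1])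
  have c: "real m + a + b + 2 \<noteq> 0" using np_ne[OF Suc.prems(3), of m] by (simp add: algebra_simps)
  have zz: "a + 1 + (b + 1) + 1 = a + b + 1 + 1 + real 1" by simp
  have g3: "Gamma (a + 1 + (b + 1) + 1) \<noteq> 0"
    unfolding zz Gamma_eq_zero_iff by (rule np[OF Suc.prems(3)])
  have F1: "jacobi_nu (Suc m) a b = FF (Suc m) a b" by (rule nu_FF) simp
  have F2: "jacobi_nu m (a+1) (b+1) = FF m (a+1) (b+1)" by (rule nu_FF) (rule disjI2, rule g3)
  have S: "jacobi_nu (Suc m) a b * (real m + a + b + 2) = (real m + 1) * jacobi_nu m (a+1) (b+1)"
    unfolding F1 F2 by (rule nu_suc[OF Suc.prems(3)])
  have K: "jacobi_nu 0 (a+1) (b+1) = KK a b * jacobi_nu 0 a b" by (rule nu0_shift[OF Suc.prems])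
  have "jacobi_nu (Suc m) a b = (real m + 1) / (real m + a + b + 2) * jacobi_nu m (a+1) (b+1)"
    using S c by (simp add: field_simps)
  also have "jacobi_nu m (a+1) (b+1) = cR m (a+1) (b+1) * jacobi_nu 0 (a+1) (b+1)"
    using IH ne0' by (simp add: field_simps)
  finally have X: "jacobi_nu (Suc m) a b = (real m + 1) / (real m + a + b + 2) * (cR m (a+1) (b+1) * (KK a b * jacobi_nu 0 a b))"
    unfolding K .
  have gen: "N \<noteq> 0 \<Longrightarrow> c \<noteq> 0 \<Longrightarrow> X = u/c*(R*(K*N)) \<Longrightarrow> X/N = u*K/c*R" for N X u c R K :: real
    by (simp add: field_simps)
  show ?case using gen[OF ne0 c X] by simp
qed

lemma deriv_main:
  fixes q f :: "real poly"
  assumes eq: "f - [:c:] = Lop a b q" and x: "x \<in> {-1<..<1}"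
  shows "((\<lambda>t. (1 - t) powr (a + 1) * (1 + t) powr (b + 1) * (poly q t / poly 1 t)) has_real_derivative
          ((poly f x - c) * (1 - x) powr a * (1 + x) powr b)) (at x)"
proof -
  have x1: "1 - x > 0" and x2: "1 + x > 0" using x by auto
  have d: "((\<lambda>t. (1 - t) powr (a + 1) * (1 + t) powr (b + 1) * poly q t) has_real_derivative
     ((a + 1) * (1 - x) powr (a + 1 - 1) * (-1) * (1 + x) powr (b + 1) * poly q x
      + (1 - x) powr (a + 1) * ((b + 1) * (1 + x) powr (b + 1 - 1) * 1) * poly q x
      + (1 - x) powr (a + 1) * (1 + x) powr (b + 1) * poly (pderiv q) x)) (at x)"
    using x by (auto intro!: derivative_eq_intros poly_DERIV simp: x1 x2 algebra_simps)
  have pf: "poly f x - c = poly (Lop a b q) x"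
    using arg_cong[OF eq, of "\<lambda>p. poly p x"] by simp
  have pa: "(1 - x) powr (a + 1) = (1 - x) * (1 - x) powr a"
    using x1 by (simp add: powr_add)
  have pb: "(1 + x) powr (b + 1) = (1 + x) * (1 + x) powr b"
    using x2 by (simp add: powr_add)
  have "(a + 1) * (1 - x) powr (a + 1 - 1) * (-1) * (1 + x) powr (b + 1) * poly q x
      + (1 - x) powr (a + 1) * ((b + 1) * (1 + x) powr (b + 1 - 1) * 1) * poly q x
      + (1 - x) powr (a + 1) * (1 + x) powr (b + 1) * poly (pderiv q) x
      = (poly f x - c) * (1 - x) powr a * (1 + x) powr b"
    unfolding pf pa pb by (simp add: Lop_def algebra_simps)
  with d show ?thesis by simp
qed


lemma poly_jp: "poly (jp n a b) x = jacobi_pi n a b x"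
  by (simp add: jp_def jPs_def jacobi_pi_def jacobiP_def jcoef_def poly_sum sum_distrib_left algebra_simps)

lemma Hy_of: assumes "a + b + 1 \<notin> neg_ints" shows "Hy a b"
  unfolding Hy_def
proof
  fix k :: nat
  show "a + b + 2 + real k \<noteq> 0" using np_ne[OF assms, of k] by (simp add: algebra_simps)
qed

lemma lam_ne: assumes "Hy a b" "m \<noteq> n" shows "lam m a b \<noteq> lam n a b"
proof
  assume e: "lam m a b = lam n a b"
  have "(real n - real m) * (real n + real m + a + b + 1) = lam n a b - lam m a b"
    unfolding lam_def by (simp add: algebra_simps)
  then have "(real n - real m) * (real n + real m + a + b + 1) = 0" using e by simp
  moreover have "real n - real m \<noteq> 0" using assms(2) by simp
  ultimately have z: "real n + real m + a + b + 1 = 0" by simp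
  have "n + m \<ge> 1" using assms(2) by simp
  then have "real (n + m - 1) = real n + real m - 1" by (simp add: of_nat_diff)
  then have "a + b + 2 + real (n + m - 1) = 0" using z by simp
  with assms(1) show False unfolding Hy_def by blast
qed

theorem mainTheorem13:
  fixes a b :: real and m n :: nat
  assumes "a \<notin> neg_ints" and "b \<notin> neg_ints" and "a + b + 1 \<notin> neg_ints"
  shows "\<exists>p r :: real poly.
           poly r 1 \<noteq> 0 \<and> poly r (-1) \<noteq> 0 \<and>
           (\<forall>x \<in> {-1<..<1}. poly r x \<noteq> 0 \<and>
              ((\<lambda>t. (1 - t) powr (a + 1) * (1 + t) powr (b + 1) * (poly p t / poly r t))
                 has_real_derivative
                 ((jacobi_pi m a b x * jacobi_pi n a b x
                    - (if m = n then jacobi_nu n a b / jacobi_nu 0 a b else 0))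
                  * (1 - x) powr a * (1 + x) powr b)) (at x))"
proof -
  have H: "Hy a b" by (rule Hy_of[OF assms(3)])
  obtain q where q: "jp m a b * jp n a b - [:(if m = n then jacobi_nu n a b / jacobi_nu 0 a b else 0):] = Lop a b q"
  proof (cases "m = n")
    case True
    obtain q where "jp n a b * jp n a b - [:cR n a b:] = Lop a b q" using norm_ind[OF H, of n] by (elim exE)
    then show ?thesis using that True nu_ratio[OF assms, of n] by simp
  next
    case False
    obtain q where "jp m a b * jp n a b - [:0:] = Lop a b q" using orth[OF H lam_ne[OF H False]] by (elim exE)
    then show ?thesis using that False by simp
  qed
  have "\<forall>x \<in> {-1<..<1}. poly 1 x \<noteq> (0::real) \<and>
              ((\<lambda>t. (1 - t) powr (a + 1) * (1 + t) powr (b + 1) * (poly q t / poly 1 t))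
                 has_real_derivative
                 ((jacobi_pi m a b x * jacobi_pi n a b x
                    - (if m = n then jacobi_nu n a b / jacobi_nu 0 a b else 0))
                  * (1 - x) powr a * (1 + x) powr b)) (at x)"
  proof
    fix x :: real assume x: "x \<in> {-1<..<1}"
    show "poly 1 x \<noteq> (0::real) \<and>
              ((\<lambda>t. (1 - t) powr (a + 1) * (1 + t) powr (b + 1) * (poly q t / poly 1 t))
                 has_real_derivative
                 ((jacobi_pi m a b x * jacobi_pi n a b x
                    - (if m = n then jacobi_nu n a b / jacobi_nu 0 a b else 0))
                  * (1 - x) powr a * (1 + x) powr b)) (at x)"
      using deriv_main[OF q x] by (simp add: poly_jp)
  qed
  then show ?thesis by (intro exI[of _ q] exI[of _ 1]) simp
qed

end
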